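(* Let $\mathbb{F}\in\{\mathbb{R},\mathbb{C}\}$, let $A$ be an $n\times m$ matrix over $\mathbb{F}$ and let $p,q,r,s,r',s'\in[1,\infty]$ with $\mathrm{sgn}(p-r')=\mathrm{sgn}(p-r)$ and $\mathrm{sgn}(q-s')=\mathrm{sgn}(q-s)$. If $$\|A\|_{r,s}= m^{[(1/p)-(1/r)]_+}\, n^{[(1/s)-(1/q)]_+}\,\|A\|_{p,q},$$ then also $$\|A\|_{r',s'}= m^{[(1/p)-(1/r')]_+}\, n^{[(1/s')-(1/q)]_+}\,\|A\|_{p,q}.$$
   Context: $\|x\|_p$ is the Hölder $\ell_p$ norm; $\|A\|_{p,q}=\max_{x\in\mathbb{F}^m,x\ne0}\|Ax\|_q/\|x\|_p$ (for real $A$ one may take $\mathbb{F}=\mathbb{R}$ or $\mathbb{C}$). $[z]_+=\max(z,0)$, $\mathrm{sgn}$ is the sign function, and $1/\infty=0$. *)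

theory Defs
  imports "HOL-Analysis.Analysis" "HOL-Library.Extended_Real"
begin

definition recip :: "ereal \<Rightarrow> real" where
  "recip p = (if p = \<infinity> then 0 else 1 / real_of_ereal p)"

definition lpnorm :: "ereal \<Rightarrow> ('a::real_normed_vector)^'n \<Rightarrow> real" where
  "lpnorm p x = (if p = \<infinity> then Max (range (\<lambda>i. norm (x $ i)))
                 else (\<Sum>i\<in>UNIV. norm (x $ i) powr real_of_ereal p) powr (1 / real_of_ereal p))"

definition opnorm :: "ereal \<Rightarrow> ereal \<Rightarrow> ('a::real_normed_field)^'m^'n \<Rightarrow> real" where
  "opnorm p q A = Sup {lpnorm q (A *v x) / lpnorm p x | x. x \<noteq> 0}"

definition sgn_diff :: "ereal \<Rightarrow> ereal \<Rightarrow> int" where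
  "sgn_diff a b = (if a < b then -1 else if a = b then 0 else 1)"

definition pos_part :: "real \<Rightarrow> real" where
  "pos_part z = max z 0"

end

theory Submission
  imports Defs
begin


lemma tangent1:
  fixes k t :: real
  assumes k: "k > 1" and t: "t \<ge> 0"
  shows "1 + k * (t - 1) \<le> t powr k" and "t \<noteq> 1 \<Longrightarrow> 1 + k * (t - 1) < t powr k"
proof -
  have D: "\<And>x. x > 0 \<Longrightarrow> ((\<lambda>z. z powr k) has_real_derivative k * x powr (k - 1)) (at x)"
    by (rule has_real_derivative_powr)
  have strict: "t \<noteq> 1 \<Longrightarrow> 1 + k * (t - 1) < t powr k"
  proof -
    assume t1: "t \<noteq> 1"
    consider "t = 0" | "0 < t" "t < 1" | "t > 1" using t t1 by linarith
    then show ?thesis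
    proof cases
      case 1 then show ?thesis using k by simp
    next
      case 2
      obtain z where z: "t < z" "z < 1" "1 powr k - t powr k = (1 - t) * (k * z powr (k - 1))"
        using MVT2[of t 1 "\<lambda>z. z powr k" "\<lambda>x. k * x powr (k - 1)"] 2 D by force
      have "z powr (k - 1) < 1 powr (k - 1)"
        using z 2 k by (intro powr_less_mono2) auto
      hence "z powr (k - 1) < 1" by simp
      hence "(1 - t) * (k * z powr (k - 1)) < (1 - t) * k" using 2 k by simp
      then show ?thesis using z by (simp add: algebra_simps)
    next
      case 3
      obtain z where z: "1 < z" "z < t" "t powr k - 1 powr k = (t - 1) * (k * z powr (k - 1))"
        using MVT2[of 1 t "\<lambda>z. z powr k" "\<lambda>x. k * x powr (k - 1)"] 3 D by force
      have "z powr 0 < z powr (k - 1)"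
        using z k by (intro powr_less_mono) auto
      hence "1 < z powr (k - 1)" using z by simp
      hence "(t - 1) * k < (t - 1) * (k * z powr (k - 1))" using 3 k by simp
      then show ?thesis using z by (simp add: algebra_simps)
    qed
  qed
  show "t \<noteq> 1 \<Longrightarrow> 1 + k * (t - 1) < t powr k" by (rule strict)
  show "1 + k * (t - 1) \<le> t powr k"
    by (cases "t = 1") (auto dest: strict)
qed



lemma powr_powr_inv: "(x::real) \<ge> 0 \<Longrightarrow> p > 0 \<Longrightarrow> (x powr p) powr (1/p) = x"
  by (simp add: powr_powr)

lemma powr_inv_powr: "(x::real) \<ge> 0 \<Longrightarrow> p > 0 \<Longrightarrow> (x powr (1/p)) powr p = x"
  by (simp add: powr_powr)

lemma entry_le:
  fixes a :: "'n::finite \<Rightarrow> real"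
  assumes a: "\<And>i. a i \<ge> 0" and p: "p > 0"
  shows "a i \<le> (\<Sum>j\<in>UNIV. a j powr p) powr (1/p)"
proof -
  have "a i powr p \<le> (\<Sum>j\<in>UNIV. a j powr p)"
    by (rule member_le_sum) auto
  hence "(a i powr p) powr (1/p) \<le> (\<Sum>j\<in>UNIV. a j powr p) powr (1/p)"
    using p by (intro powr_mono2) auto
  thus ?thesis using a p by (simp add: powr_powr_inv)
qed

lemma entry_less:
  fixes a :: "'n::finite \<Rightarrow> real"
  assumes a: "\<And>i. a i \<ge> 0" and p: "p > 0" and ij: "i \<noteq> j" "a j > 0"
  shows "a i < (\<Sum>j\<in>UNIV. a j powr p) powr (1/p)"
proof -
  have "a i powr p + a j powr p = (\<Sum>k\<in>{i,j}. a k powr p)" using ij by simp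
  also have "\<dots> \<le> (\<Sum>k\<in>UNIV. a k powr p)"
    by (rule sum_mono2) auto
  moreover have "a j powr p > 0" using ij by simp
  ultimately have "a i powr p < (\<Sum>k\<in>UNIV. a k powr p)" by linarith
  hence "(a i powr p) powr (1/p) < (\<Sum>j\<in>UNIV. a j powr p) powr (1/p)"
    using p by (intro powr_less_mono2) auto
  thus ?thesis using a p by (simp add: powr_powr_inv)
qed

lemma mono_fin:
  fixes a :: "'n::finite \<Rightarrow> real"
  assumes a: "\<And>i. a i \<ge> 0" and pr: "0 < p" "p < r"
  shows "(\<Sum>i\<in>UNIV. a i powr r) powr (1/r) \<le> (\<Sum>i\<in>UNIV. a i powr p) powr (1/p)"
    and "i \<noteq> j \<Longrightarrow> a i > 0 \<Longrightarrow> a j > 0 \<Longrightarrow>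
         (\<Sum>i\<in>UNIV. a i powr r) powr (1/r) < (\<Sum>i\<in>UNIV. a i powr p) powr (1/p)"
proof -
  define M where "M = (\<Sum>i\<in>UNIV. a i powr p) powr (1/p)"
  have M0: "M \<ge> 0" unfolding M_def by simp
  have Mp: "M powr p = (\<Sum>i\<in>UNIV. a i powr p)"
    unfolding M_def using pr by (intro powr_inv_powr sum_nonneg) auto
  have tm: "a k powr r \<le> a k powr p * M powr (r - p)" for k
  proof -
    have "a k powr r = a k powr p * a k powr (r - p)"
      by (simp add: powr_add[symmetric])
    also have "\<dots> \<le> a k powr p * M powr (r - p)"
      using entry_le[of a p k, OF a pr(1)] pr a
      by (intro mult_left_mono powr_mono2) (auto simp: M_def)
    finally show ?thesis .
  qed
  have sumeq: "(\<Sum>k\<in>UNIV. a k powr p * M powr (r - p)) = M powr r"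
    by (simp add: sum_distrib_right[symmetric] Mp[symmetric] powr_add[symmetric])
  have Mr: "(M powr r) powr (1/r) = M" using M0 pr by (simp add: powr_powr_inv)
  have le: "(\<Sum>i\<in>UNIV. a i powr r) \<le> M powr r"
    using sumeq sum_mono[of UNIV "\<lambda>k. a k powr r" "\<lambda>k. a k powr p * M powr (r - p)"] tm
    by simp
  show "(\<Sum>i\<in>UNIV. a i powr r) powr (1/r) \<le> (\<Sum>i\<in>UNIV. a i powr p) powr (1/p)"
    using powr_mono2[OF _ _ le, of "1/r"] pr Mr by (simp add: M_def sum_nonneg)
  assume ij: "i \<noteq> j" "a i > 0" "a j > 0"
  have ai: "a i < M" using entry_less[of a p i j, OF a pr(1) ij(1) ij(3)] by (simp add: M_def)
  have "a i powr r < a i powr p * M powr (r - p)"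
  proof -
    have "a i powr r = a i powr p * a i powr (r - p)"
      by (simp add: powr_add[symmetric])
    also have "\<dots> < a i powr p * M powr (r - p)"
      using ai pr ij by (intro mult_strict_left_mono powr_less_mono2) auto
    finally show ?thesis .
  qed
  hence lt: "(\<Sum>i\<in>UNIV. a i powr r) < M powr r"
  proof -
    have "(\<Sum>k\<in>UNIV. a k powr r) < (\<Sum>k\<in>UNIV. a k powr p * M powr (r - p))"
      by (rule sum_strict_mono_ex1[of UNIV "\<lambda>k. a k powr r" "\<lambda>k. a k powr p * M powr (r - p)"])
         (use tm \<open>a i powr r < a i powr p * M powr (r - p)\<close> in auto)
    thus ?thesis using sumeq by simp
  qed
  show "(\<Sum>i\<in>UNIV. a i powr r) powr (1/r) < (\<Sum>i\<in>UNIV. a i powr p) powr (1/p)"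
    using powr_less_mono2[OF _ _ lt, of "1/r"] pr Mr by (simp add: M_def sum_nonneg)
qed

lemma mono_inf:
  fixes a :: "'n::finite \<Rightarrow> real"
  assumes a: "\<And>i. a i \<ge> 0" and p: "0 < p"
  shows "Max (range a) \<le> (\<Sum>i\<in>UNIV. a i powr p) powr (1/p)"
    and "i \<noteq> j \<Longrightarrow> a i > 0 \<Longrightarrow> a j > 0 \<Longrightarrow>
         Max (range a) < (\<Sum>i\<in>UNIV. a i powr p) powr (1/p)"
proof -
  obtain k where k: "Max (range a) = a k"
  proof -
    have "Max (range a) \<in> range a" by (rule Max_in) auto
    thus ?thesis using that by blast
  qed
  show "Max (range a) \<le> (\<Sum>i\<in>UNIV. a i powr p) powr (1/p)"
    using k entry_le[OF a p] by simp
  assume ij: "i \<noteq> j" "a i > 0" "a j > 0"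
  show "Max (range a) < (\<Sum>i\<in>UNIV. a i powr p) powr (1/p)"
  proof (cases "k = i")
    case True thus ?thesis using k entry_less[of a p i j, OF a p ij(1) ij(3)] by simp
  next
    case False thus ?thesis using k entry_less[of a p k i, OF a p False ij(2)] by simp
  qed
qed



lemma pm_fin:
  fixes a :: "'n::finite \<Rightarrow> real"
  assumes a: "\<And>i. a i \<ge> 0" and pr: "0 < p" "p < r"
  shows "(\<Sum>i\<in>UNIV. a i powr p) powr (1/p) \<le> real CARD('n) powr (1/p - 1/r) * (\<Sum>i\<in>UNIV. a i powr r) powr (1/r)"
    and "a i \<noteq> a j \<Longrightarrow>
         (\<Sum>i\<in>UNIV. a i powr p) powr (1/p) < real CARD('n) powr (1/p - 1/r) * (\<Sum>i\<in>UNIV. a i powr r) powr (1/r)"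
proof -
  define N where "N = real CARD('n)"
  have N0: "N > 0" unfolding N_def by simp
  define B where "B = (\<Sum>i\<in>UNIV. a i powr p)"
  define kk where "kk = r / p"
  have kk: "kk > 1" using pr by (simp add: kk_def)
  have B0: "B \<ge> 0" unfolding B_def by (simp add: sum_nonneg)
  have gen: "B powr (1/p) \<le> N powr (1/p - 1/r) * (\<Sum>i\<in>UNIV. a i powr r) powr (1/r)
      \<and> ((\<exists>i j. a i \<noteq> a j) \<longrightarrow> B powr (1/p) < N powr (1/p - 1/r) * (\<Sum>i\<in>UNIV. a i powr r) powr (1/r))"
  proof (cases "B = 0")
    case True
    have "a i = 0" for i
    proof -
      have "a i powr p \<le> B" unfolding B_def by (rule member_le_sum) auto
      hence "a i powr p = 0" using True by (simp add: antisym)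
      thus ?thesis by simp
    qed
    thus ?thesis using True by simp
  next
    case False
    hence Bp: "B > 0" using B0 by simp
    define mu where "mu = B / N"
    have mu: "mu > 0" using Bp N0 by (simp add: mu_def)
    define t where "t k = a k powr p / mu" for k
    have t0: "t k \<ge> 0" for k using mu by (simp add: t_def)
    have sumt: "(\<Sum>k\<in>UNIV. t k) = N"
    proof -
      have "(\<Sum>k\<in>UNIV. t k) = (\<Sum>k\<in>UNIV. a k powr p) / mu"
        by (simp add: t_def sum_divide_distrib)
      thus ?thesis using Bp N0 by (simp add: B_def[symmetric] mu_def)
    qed
    have tang: "1 + kk * (t k - 1) \<le> t k powr kk" for k using tangent1(1)[OF kk t0] .
    have sum1: "(\<Sum>k\<in>UNIV. 1 + kk * (t k - 1)) = N"
      by (simp add: sum.distrib sum_subtractf sum_distrib_left[symmetric] sumt N_def)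
    have ar: "a k powr r = mu powr kk * t k powr kk" for k
    proof -
      have "a k powr r = (a k powr p) powr kk" using pr by (simp add: powr_powr kk_def)
      also have "a k powr p = mu * t k" using mu by (simp add: t_def)
      finally show ?thesis by (simp add: powr_mult)
    qed
    have Sr: "(\<Sum>k\<in>UNIV. a k powr r) = mu powr kk * (\<Sum>k\<in>UNIV. t k powr kk)"
      by (simp add: ar sum_distrib_left)
    have key: "N powr (1/p - 1/r) * (mu powr kk * X) powr (1/r) = B powr (1/p) * (X / N) powr (1/r)"
      if "X \<ge> 0" for X
    proof -
      have "(mu powr kk * X) powr (1/r) = mu powr (1/p) * X powr (1/r)"
        using pr by (simp add: powr_mult powr_powr kk_def)
      also have "mu powr (1/p) = B powr (1/p) / N powr (1/p)"
        by (simp add: mu_def powr_divide)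
      finally have "N powr (1/p - 1/r) * (mu powr kk * X) powr (1/r)
          = B powr (1/p) * (N powr (1/p - 1/r) / N powr (1/p) * X powr (1/r))" by simp
      also have "N powr (1/p - 1/r) / N powr (1/p) = 1 / N powr (1/r)"
        using N0 by (simp add: powr_diff)
      finally show ?thesis by (simp add: powr_divide)
    qed
    have T: "(\<Sum>k\<in>UNIV. t k powr kk) \<ge> 0" by (simp add: sum_nonneg)
    have ge: "N \<le> (\<Sum>k\<in>UNIV. t k powr kk)"
      using sum_mono[of UNIV "\<lambda>k. 1 + kk * (t k - 1)" "\<lambda>k. t k powr kk"] tang sum1 by simp
    have "1 \<le> ((\<Sum>k\<in>UNIV. t k powr kk) / N) powr (1/r)"
    proof -
      have "1 \<le> (\<Sum>k\<in>UNIV. t k powr kk) / N" using ge N0 by simp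
      thus ?thesis using pr by (simp add: ge_one_powr_ge_zero)
    qed
    hence weak: "B powr (1/p) \<le> N powr (1/p - 1/r) * (\<Sum>i\<in>UNIV. a i powr r) powr (1/r)"
      unfolding Sr key[OF T] using mult_left_mono[of 1 _ "B powr (1/p)"] by simp
    have strict: "B powr (1/p) < N powr (1/p - 1/r) * (\<Sum>i\<in>UNIV. a i powr r) powr (1/r)"
      if ij: "a i \<noteq> a j" for i j
    proof -
      have "t i \<noteq> t j"
      proof
        assume "t i = t j"
        hence "a i powr p = a j powr p" using mu by (simp add: t_def)
        hence "(a i powr p) powr (1/p) = (a j powr p) powr (1/p)" by simp
        thus False using ij a pr by (simp add: powr_powr_inv)
      qed
      then obtain k where k: "t k \<noteq> 1" by metis
      have "(\<Sum>k\<in>UNIV. 1 + kk * (t k - 1)) < (\<Sum>k\<in>UNIV. t k powr kk)"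
        by (rule sum_strict_mono_ex1) (use tang tangent1(2)[OF kk t0 k] in auto)
      hence "N < (\<Sum>k\<in>UNIV. t k powr kk)" using sum1 by simp
      hence "1 < (\<Sum>k\<in>UNIV. t k powr kk) / N" using N0 by simp
      hence "1 powr (1/r) < ((\<Sum>k\<in>UNIV. t k powr kk) / N) powr (1/r)"
        using pr by (intro powr_less_mono2) auto
      hence "B powr (1/p) * 1 < B powr (1/p) * ((\<Sum>k\<in>UNIV. t k powr kk) / N) powr (1/r)"
        using Bp by (intro mult_strict_left_mono) auto
      thus ?thesis unfolding Sr key[OF T] by simp
    qed
    show ?thesis using weak strict by blast
  qed
  show "(\<Sum>i\<in>UNIV. a i powr p) powr (1/p) \<le> real CARD('n) powr (1/p - 1/r) * (\<Sum>i\<in>UNIV. a i powr r) powr (1/r)"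
    using gen by (simp add: B_def N_def)
  show "a i \<noteq> a j \<Longrightarrow>
         (\<Sum>i\<in>UNIV. a i powr p) powr (1/p) < real CARD('n) powr (1/p - 1/r) * (\<Sum>i\<in>UNIV. a i powr r) powr (1/r)"
    using gen by (auto simp add: B_def N_def)
qed

lemma pm_inf:
  fixes a :: "'n::finite \<Rightarrow> real"
  assumes a: "\<And>i. a i \<ge> 0" and p: "0 < p"
  shows "(\<Sum>i\<in>UNIV. a i powr p) powr (1/p) \<le> real CARD('n) powr (1/p) * Max (range a)"
    and "a i \<noteq> a j \<Longrightarrow>
         (\<Sum>i\<in>UNIV. a i powr p) powr (1/p) < real CARD('n) powr (1/p) * Max (range a)"
proof -
  define M where "M = Max (range a)"
  have le: "a k \<le> M" for k unfolding M_def by (rule Max_ge) auto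
  have M0: "M \<ge> 0" using le[of undefined] a[of undefined] by linarith
  have eq: "(real CARD('n) * M powr p) powr (1/p) = real CARD('n) powr (1/p) * M"
    using p M0 by (simp add: powr_mult powr_powr_inv)
  have tm: "a k powr p \<le> M powr p" for k using le a p by (intro powr_mono2) auto
  have s: "(\<Sum>i\<in>UNIV. a i powr p) \<le> real CARD('n) * M powr p"
    using sum_mono[of UNIV "\<lambda>k. a k powr p" "\<lambda>k. M powr p"] tm by simp
  show "(\<Sum>i\<in>UNIV. a i powr p) powr (1/p) \<le> real CARD('n) powr (1/p) * Max (range a)"
    using powr_mono2[OF _ _ s, of "1/p"] p eq by (simp add: sum_nonneg M_def)
  assume ij: "a i \<noteq> a j"
  obtain k where k: "a k < M" using ij le by (metis order_less_le)
  have "a k powr p < M powr p" using k a p by (intro powr_less_mono2) auto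
  hence s2: "(\<Sum>i\<in>UNIV. a i powr p) < real CARD('n) * M powr p"
    using sum_strict_mono_ex1[of UNIV "\<lambda>k. a k powr p" "\<lambda>k. M powr p"] tm by force
  show "(\<Sum>i\<in>UNIV. a i powr p) powr (1/p) < real CARD('n) powr (1/p) * Max (range a)"
    using powr_less_mono2[OF _ _ s2, of "1/p"] p eq by (simp add: sum_nonneg M_def)
qed



definition Lp :: "ereal \<Rightarrow> ('n::finite \<Rightarrow> real) \<Rightarrow> real" where
  "Lp p a = (if p = \<infinity> then Max (range a)
             else (\<Sum>i\<in>UNIV. a i powr real_of_ereal p) powr (1 / real_of_ereal p))"

lemma lpnorm_Lp: "lpnorm p x = Lp p (\<lambda>i. norm (x $ i))"
  by (simp add: lpnorm_def Lp_def)

lemma ereal_fin: "1 \<le> p \<Longrightarrow> p \<noteq> \<infinity> \<Longrightarrow> \<exists>p'. p = ereal p' \<and> p' \<ge> 1"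
  by (cases p) auto

lemma recip_fin: "recip (ereal p) = 1 / p" by (simp add: recip_def)
lemma recip_inf: "recip \<infinity> = 0" by (simp add: recip_def)

lemma recip_less: "1 \<le> p \<Longrightarrow> p < r \<Longrightarrow> recip r < recip p"
  by (cases p; cases r) (auto simp: recip_def frac_less2)

lemma recip_nonneg: "1 \<le> p \<Longrightarrow> recip p \<ge> 0"
  by (cases p) (auto simp: recip_def)

lemma Max_range_ge: "(a::'n::finite \<Rightarrow> real) i \<le> Max (range a)"
  by (rule Max_ge) auto

lemma Lp_nonneg: "(\<And>i. a i \<ge> 0) \<Longrightarrow> Lp p a \<ge> 0"
proof -
  assume a: "\<And>i. a i \<ge> 0"
  have "0 \<le> Max (range a)" using a[of undefined] Max_range_ge[of a undefined] by linarith
  thus ?thesis unfolding Lp_def by auto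
qed

lemma Lp_pos: "(\<And>i. a i \<ge> 0) \<Longrightarrow> a i > 0 \<Longrightarrow> 1 \<le> p \<Longrightarrow> Lp p a > 0"
proof (cases "p = \<infinity>")
  case True
  assume "a i > 0"
  hence "0 < Max (range a)" using Max_range_ge[of a i] by linarith
  thus ?thesis using True by (simp add: Lp_def)
next
  case False
  assume a: "\<And>i. a i \<ge> 0" and ai: "a i > 0" and p: "1 \<le> p"
  obtain p' where p': "p = ereal p'" "p' \<ge> 1" using ereal_fin[OF p False] by auto
  have "0 < a i powr p'" using ai by simp
  also have "a i powr p' \<le> (\<Sum>i\<in>UNIV. a i powr p')" by (rule member_le_sum) auto
  finally show ?thesis using p' by (simp add: Lp_def)
qed

lemma L_mono:
  fixes a :: "'n::finite \<Rightarrow> real"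
  assumes a: "\<And>i. a i \<ge> 0" and p: "1 \<le> p" and pr: "p < r"
  shows "Lp r a \<le> Lp p a"
    and "i \<noteq> j \<Longrightarrow> a i > 0 \<Longrightarrow> a j > 0 \<Longrightarrow> Lp r a < Lp p a"
proof -
  obtain p' where p': "p = ereal p'" "p' \<ge> 1" using ereal_fin[OF p] pr by fastforce
  have "r = \<infinity> \<or> (\<exists>r'. r = ereal r' \<and> p' < r')" using pr p' by (cases r) auto
  then consider "r = \<infinity>" | r' where "r = ereal r'" "p' < r'" by blast
  hence "Lp r a \<le> Lp p a \<and> (i \<noteq> j \<longrightarrow> a i > 0 \<longrightarrow> a j > 0 \<longrightarrow> Lp r a < Lp p a)"
  proof cases
    case 1 thus ?thesis using mono_inf(1)[where a=a and p=p', OF a] mono_inf(2)[where a=a and p=p' and i=i and j=j, OF a] p' by (simp add: Lp_def)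
  next
    case 2 thus ?thesis using mono_fin(1)[where a=a and p=p' and r=r', OF a] mono_fin(2)[where a=a and p=p' and r=r' and i=i and j=j, OF a] p' by (simp add: Lp_def)
  qed
  thus "Lp r a \<le> Lp p a" "i \<noteq> j \<Longrightarrow> a i > 0 \<Longrightarrow> a j > 0 \<Longrightarrow> Lp r a < Lp p a" by auto
qed

lemma L_pm:
  fixes a :: "'n::finite \<Rightarrow> real"
  assumes a: "\<And>i. a i \<ge> 0" and p: "1 \<le> p" and pr: "p < r"
  shows "Lp p a \<le> real CARD('n) powr (recip p - recip r) * Lp r a"
    and "a i \<noteq> a j \<Longrightarrow> Lp p a < real CARD('n) powr (recip p - recip r) * Lp r a"
proof -
  obtain p' where p': "p = ereal p'" "p' \<ge> 1" using ereal_fin[OF p] pr by fastforce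
  have "r = \<infinity> \<or> (\<exists>r'. r = ereal r' \<and> p' < r')" using pr p' by (cases r) auto
  then consider "r = \<infinity>" | r' where "r = ereal r'" "p' < r'" by blast
  hence "Lp p a \<le> real CARD('n) powr (recip p - recip r) * Lp r a \<and>
     (a i \<noteq> a j \<longrightarrow> Lp p a < real CARD('n) powr (recip p - recip r) * Lp r a)"
  proof cases
    case 1 thus ?thesis using pm_inf(1)[where a=a and p=p', OF a] pm_inf(2)[where a=a and p=p' and i=i and j=j, OF a] p' by (simp add: Lp_def recip_def)
  next
    case 2 thus ?thesis using pm_fin(1)[where a=a and p=p' and r=r', OF a] pm_fin(2)[where a=a and p=p' and r=r' and i=i and j=j, OF a] p' by (simp add: Lp_def recip_def)
  qed
  thus "Lp p a \<le> real CARD('n) powr (recip p - recip r) * Lp r a"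
    "a i \<noteq> a j \<Longrightarrow> Lp p a < real CARD('n) powr (recip p - recip r) * Lp r a" by auto
qed

lemma L_const:
  fixes a :: "'n::finite \<Rightarrow> real"
  assumes a: "\<And>i. a i = c" and c: "c \<ge> 0" and p: "1 \<le> p"
  shows "Lp p a = real CARD('n) powr (recip p) * c"
proof (cases "p = \<infinity>")
  case True
  have "range a = {c}" using a by auto
  thus ?thesis using True by (simp add: Lp_def recip_def)
next
  case False
  obtain p' where p': "p = ereal p'" "p' \<ge> 1" using ereal_fin[OF p False] by auto
  have "(real CARD('n) * c powr p') powr (1/p') = real CARD('n) powr (1/p') * c"
    using p' c by (simp add: powr_mult powr_powr_inv)
  thus ?thesis using p' a by (simp add: Lp_def recip_def)
qed

lemma L_single:
  fixes a :: "'n::finite \<Rightarrow> real"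
  assumes a: "\<And>i. i \<noteq> j \<Longrightarrow> a i = 0" and aj: "a j \<ge> 0" and p: "1 \<le> p"
  shows "Lp p a = a j"
proof (cases "p = \<infinity>")
  case True
  have le: "a x \<le> a j" for x using a[of x] aj by (cases "x = j") auto
  have "Max (range a) = a j"
    by (rule Max_eqI) (use le in auto)
  thus ?thesis using True by (simp add: Lp_def)
next
  case False
  obtain p' where p': "p = ereal p'" "p' \<ge> 1" using ereal_fin[OF p False] by auto
  have "(\<Sum>i\<in>UNIV. a i powr p') = (\<Sum>i\<in>UNIV. if i = j then a j powr p' else 0)"
    by (rule sum.cong) (use a in auto)
  hence "(\<Sum>i\<in>UNIV. a i powr p') = a j powr p'" by simp
  thus ?thesis using p' aj by (simp add: Lp_def powr_powr_inv)
qed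

lemma L_scale:
  fixes a :: "'n::finite \<Rightarrow> real"
  assumes a: "\<And>i. a i \<ge> 0" and c: "c \<ge> 0" and p: "1 \<le> p"
  shows "Lp p (\<lambda>i. c * a i) = c * Lp p a"
proof (cases "p = \<infinity>")
  case True
  have m: "mono (\<lambda>x::real. c * x)" using c by (auto intro!: monoI mult_left_mono)
  have "c * Max (range a) = Max ((\<lambda>x. c * x) ` range a)"
    by (rule mono_Max_commute[OF m]) auto
  also have "(\<lambda>x. c * x) ` range a = range (\<lambda>i. c * a i)" by auto
  finally show ?thesis using True by (simp add: Lp_def)
next
  case False
  obtain p' where p': "p = ereal p'" "p' \<ge> 1" using ereal_fin[OF p False] by auto
  have "(\<Sum>i\<in>UNIV. (c * a i) powr p') = c powr p' * (\<Sum>i\<in>UNIV. a i powr p')"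
    by (simp add: powr_mult sum_distrib_left)
  hence "Lp p (\<lambda>i. c * a i) = (c powr p') powr (1/p') * (\<Sum>i\<in>UNIV. a i powr p') powr (1/p')"
    using p' by (simp add: Lp_def powr_mult)
  thus ?thesis using p' c by (simp add: powr_powr_inv Lp_def)
qed



lemma recip_le: "1 \<le> r \<Longrightarrow> r \<le> p \<Longrightarrow> recip p \<le> recip r"
  using recip_less[of r p] by (cases "r = p") (auto simp: order_le_less)

lemma pos_lt: "1 \<le> p \<Longrightarrow> p < r \<Longrightarrow> pos_part (recip p - recip r) = recip p - recip r"
  using recip_less[of p r] by (simp add: pos_part_def)

lemma pos_ge: "1 \<le> r \<Longrightarrow> r \<le> p \<Longrightarrow> pos_part (recip p - recip r) = 0"
  using recip_le[of r p] by (simp add: pos_part_def)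

lemma L_ineq:
  fixes a :: "'n::finite \<Rightarrow> real"
  assumes a: "\<And>i. a i \<ge> 0" and p: "1 \<le> p" and r: "1 \<le> r"
  shows "Lp p a \<le> real CARD('n) powr pos_part (recip p - recip r) * Lp r a"
proof (cases "p < r")
  case True thus ?thesis using L_pm(1)[where a=a, OF a p True] pos_lt[OF p True] by simp
next
  case False
  hence "r \<le> p" by simp
  hence pp: "pos_part (recip p - recip r) = 0" using pos_ge r by blast
  show ?thesis
  proof (cases "r = p")
    case True thus ?thesis using pp by simp
  next
    case False
    hence "r < p" using \<open>r \<le> p\<close> by simp
    thus ?thesis using L_mono(1)[where a=a, OF a r] pp by simp
  qed
qed

lemma eq_pm:
  fixes a :: "'n::finite \<Rightarrow> real"
  assumes a: "\<And>i. a i \<ge> 0" and p: "1 \<le> p" and pr: "p < r"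
    and eq: "Lp p a = real CARD('n) powr (recip p - recip r) * Lp r a"
  shows "a i = a j"
  using L_pm(2)[where a=a, OF a p pr, of i j] eq by linarith

lemma eq_mono:
  fixes a :: "'n::finite \<Rightarrow> real"
  assumes a: "\<And>i. a i \<ge> 0" and p: "1 \<le> p" and pr: "p < r"
    and eq: "Lp r a = Lp p a"
  shows "i \<noteq> j \<Longrightarrow> a i = 0 \<or> a j = 0"
  using L_mono(2)[where a=a, OF a p pr, of i j] eq a[of i] a[of j] by force

lemma const_all:
  fixes a :: "'n::finite \<Rightarrow> real"
  assumes a: "\<And>i. a i \<ge> 0" and c: "\<And>i j. a i = a j" and p: "1 \<le> p" and r: "1 \<le> r"
  shows "Lp p a = real CARD('n) powr (recip p - recip r) * Lp r a"
proof -
  define c0 where "c0 = a undefined"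
  have ac: "a i = c0" for i using c by (simp add: c0_def)
  have "Lp p a = real CARD('n) powr (recip p) * c0" using L_const[OF ac _ p] a[of undefined] c0_def by simp
  moreover have "Lp r a = real CARD('n) powr (recip r) * c0" using L_const[OF ac _ r] a[of undefined] c0_def by simp
  moreover have "real CARD('n) powr (recip p) = real CARD('n) powr (recip p - recip r) * real CARD('n) powr (recip r)"
    by (simp add: powr_add[symmetric])
  ultimately show ?thesis by simp
qed

lemma single_all:
  fixes a :: "'n::finite \<Rightarrow> real"
  assumes a: "\<And>i. a i \<ge> 0" and s: "\<And>i j. i \<noteq> j \<Longrightarrow> a i = 0 \<or> a j = 0" and p: "1 \<le> p" and r: "1 \<le> r"
  shows "Lp p a = Lp r a"
proof -
  obtain j where j: "\<And>i. i \<noteq> j \<Longrightarrow> a i = 0"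
  proof (cases "\<exists>j. a j \<noteq> 0")
    case True
    then obtain j where "a j \<noteq> 0" by blast
    thus ?thesis using s that by blast
  next
    case False thus ?thesis using that by blast
  qed
  show ?thesis using L_single[where a=a and j=j, OF j a p] L_single[where a=a and j=j, OF j a r] by simp
qed

lemma transfer_dom:
  fixes a :: "'n::finite \<Rightarrow> real"
  assumes a: "\<And>i. a i \<ge> 0" and p: "1 \<le> p" and r: "1 \<le> r" and r': "1 \<le> r'"
    and sg: "sgn_diff p r' = sgn_diff p r"
    and eq: "Lp p a = real CARD('n) powr pos_part (recip p - recip r) * Lp r a"
  shows "Lp p a = real CARD('n) powr pos_part (recip p - recip r') * Lp r' a"
proof -
  consider "p < r" "p < r'" | "p = r" "p = r'" | "r < p" "r' < p"
    using sg by (auto simp: sgn_diff_def split: if_splits)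
  thus ?thesis
  proof cases
    case 1
    have "a i = a j" for i j using eq_pm[where a=a, OF a p 1(1)] eq pos_lt[OF p 1(1)] by simp
    thus ?thesis using const_all[where a=a, OF a _ p r'] pos_lt[OF p 1(2)] by simp
  next
    case 2 thus ?thesis by (simp add: pos_part_def)
  next
    case 3
    have "Lp p a = Lp r a" using eq pos_ge[OF r] 3 by simp
    hence "i \<noteq> j \<Longrightarrow> a i = 0 \<or> a j = 0" for i j using eq_mono[where a=a, OF a r 3(1)] by simp
    thus ?thesis using single_all[where a=a, OF a _ p r'] pos_ge[OF r'] 3 by simp
  qed
qed

lemma transfer_cod:
  fixes a :: "'n::finite \<Rightarrow> real"
  assumes a: "\<And>i. a i \<ge> 0" and q: "1 \<le> q" and s: "1 \<le> s" and s': "1 \<le> s'"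
    and sg: "sgn_diff q s' = sgn_diff q s"
    and eq: "Lp s a = real CARD('n) powr pos_part (recip s - recip q) * Lp q a"
  shows "Lp s' a = real CARD('n) powr pos_part (recip s' - recip q) * Lp q a"
proof -
  consider "s < q" "s' < q" | "q = s" "q = s'" | "q < s" "q < s'"
    using sg by (auto simp: sgn_diff_def split: if_splits)
  thus ?thesis
  proof cases
    case 1
    have "a i = a j" for i j using eq_pm[where a=a, OF a s 1(1)] eq pos_lt[OF s 1(1)] by simp
    thus ?thesis using const_all[where a=a, OF a _ s' q] pos_lt[OF s' 1(2)] by simp
  next
    case 2 thus ?thesis by (simp add: pos_part_def)
  next
    case 3
    have "Lp s a = Lp q a" using eq pos_ge[OF q] 3 by simp
    hence "i \<noteq> j \<Longrightarrow> a i = 0 \<or> a j = 0" for i j using eq_mono[where a=a, OF a q 3(1)] by simp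
    thus ?thesis using single_all[where a=a, OF a _ s' q] pos_ge[OF q] 3 by simp
  qed
qed



lemma cont_Max:
  fixes f :: "'i \<Rightarrow> 'x::topological_space \<Rightarrow> real"
  assumes "finite I" "I \<noteq> {}" "\<And>i. i \<in> I \<Longrightarrow> continuous_on S (f i)"
  shows "continuous_on S (\<lambda>x. Max ((\<lambda>i. f i x) ` I))"
  using assms
proof (induction I rule: finite_ne_induct)
  case (singleton i) thus ?case by simp
next
  case (insert i F)
  have "continuous_on S (\<lambda>x. max (f i x) (Max ((\<lambda>i. f i x) ` F)))"
    using insert by (intro continuous_on_max) auto
  moreover have "Max ((\<lambda>j. f j x) ` insert i F) = max (f i x) (Max ((\<lambda>i. f i x) ` F))" for x
    using insert by simp
  ultimately show ?case by simp
qed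

lemma cont_Lp:
  fixes h :: "'n::finite \<Rightarrow> 'x::topological_space \<Rightarrow> real"
  assumes h: "\<And>i. continuous_on S (h i)" and h0: "\<And>i x. h i x \<ge> 0" and p: "1 \<le> p"
  shows "continuous_on S (\<lambda>x. Lp p (\<lambda>i. h i x))"
proof (cases "p = \<infinity>")
  case True
  have "continuous_on S (\<lambda>x. Max ((\<lambda>i. h i x) ` UNIV))"
    by (rule cont_Max) (use h in auto)
  thus ?thesis using True by (simp add: Lp_def)
next
  case False
  obtain p' where p': "p = ereal p'" "p' \<ge> 1" using ereal_fin[OF p False] by auto
  have "continuous_on S (\<lambda>x. (\<Sum>i\<in>UNIV. h i x powr p') powr (1 / p'))"
    using p' h0
    by (intro continuous_on_powr' continuous_on_sum continuous_on_const h)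
       (auto simp: sum_nonneg)
  thus ?thesis using p' by (simp add: Lp_def)
qed

lemma lpnorm_nonneg: "lpnorm p x \<ge> 0"
  unfolding lpnorm_Lp by (rule Lp_nonneg) simp

lemma lpnorm_pos: "x \<noteq> 0 \<Longrightarrow> 1 \<le> p \<Longrightarrow> lpnorm p x > 0"
proof -
  assume x: "x \<noteq> 0" and p: "1 \<le> p"
  obtain i where "x $ i \<noteq> 0" using x by (metis vec_eq_iff zero_index)
  thus ?thesis unfolding lpnorm_Lp by (intro Lp_pos[OF _ _ p]) auto
qed

lemma lpnorm_scale: "1 \<le> p \<Longrightarrow> lpnorm p (c *\<^sub>R x) = \<bar>c\<bar> * lpnorm p x"
  unfolding lpnorm_Lp using L_scale[of "\<lambda>i. norm (x $ i)" "\<bar>c\<bar>" p] by simp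

lemma mv_scale:
  fixes A :: "'a::real_normed_field^'m::finite^'n::finite"
  shows "A *v (c *\<^sub>R x) = c *\<^sub>R (A *v x)"
  by (simp add: vec_eq_iff matrix_vector_mult_def scaleR_sum_right mult_scaleR_right)

definition ratio :: "ereal \<Rightarrow> ereal \<Rightarrow> ('a::real_normed_field)^'m^'n \<Rightarrow> 'a^'m \<Rightarrow> real" where
  "ratio p q A x = lpnorm q (A *v x) / lpnorm p x"

lemma ratio_scale:
  fixes A :: "'a::real_normed_field^'m::finite^'n::finite"
  assumes "c \<noteq> 0" "1 \<le> p" "1 \<le> q" "x \<noteq> 0"
  shows "ratio p q A (c *\<^sub>R x) = ratio p q A x"
  using assms lpnorm_pos[of x p]
  by (simp add: ratio_def mv_scale lpnorm_scale)

lemma attain: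
  fixes A :: "'a::{real_normed_field,heine_borel}^'m::finite^'n::finite"
  assumes p: "1 \<le> p" and q: "1 \<le> q"
  shows "\<exists>x0. x0 \<noteq> 0 \<and> (\<forall>x. x \<noteq> 0 \<longrightarrow> ratio p q A x \<le> ratio p q A x0)
            \<and> opnorm p q A = ratio p q A x0"
proof -
  let ?S = "sphere (0::'a^'m) 1"
  have cS: "compact ?S"
    by (simp add: compact_eq_bounded_closed)
  define y :: "'a^'m" where "y = axis undefined 1"
  have y: "y \<noteq> 0" by (simp add: y_def axis_eq_0_iff)
  have "(1 / norm y) *\<^sub>R y \<in> ?S" using y by simp
  hence neS: "?S \<noteq> {}" by blast
  have cont: "continuous_on ?S (ratio p q A)"
  proof -
    have c1: "continuous_on ?S (\<lambda>x. lpnorm q (A *v x))"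
      unfolding lpnorm_Lp matrix_vector_mult_def
      by (intro cont_Lp q continuous_intros) auto
    have c2: "continuous_on ?S (\<lambda>x. lpnorm p x)"
      unfolding lpnorm_Lp
      by (intro cont_Lp p continuous_intros) auto
    have "\<forall>x\<in>?S. lpnorm p x \<noteq> 0"
    proof
      fix x :: "'a^'m" assume "x \<in> ?S"
      hence "x \<noteq> 0" by auto
      thus "lpnorm p x \<noteq> 0" using lpnorm_pos[OF _ p] by force
    qed
    thus ?thesis unfolding ratio_def[abs_def] by (intro continuous_on_divide c1 c2)
  qed
  obtain x0 where x0: "x0 \<in> ?S" "\<And>y. y \<in> ?S \<Longrightarrow> ratio p q A y \<le> ratio p q A x0"
    using continuous_attains_sup[OF cS neS cont] by blast
  have x00: "x0 \<noteq> 0" using x0(1) by auto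
  have all: "ratio p q A x \<le> ratio p q A x0" if "x \<noteq> 0" for x
  proof -
    have "ratio p q A x = ratio p q A ((1 / norm x) *\<^sub>R x)"
      using that p q by (simp add: ratio_scale)
    also have "\<dots> \<le> ratio p q A x0" using that by (intro x0(2)) simp
    finally show ?thesis .
  qed
  have "opnorm p q A = ratio p q A x0"
    unfolding opnorm_def ratio_def[symmetric]
    by (rule cSup_eq_maximum) (use x00 all in auto)
  thus ?thesis using x00 all by blast
qed



lemma ratio_le_factor:
  fixes A :: "'a::real_normed_field^'m::finite^'n::finite"
  assumes p: "1 \<le> p" and q: "1 \<le> q" and r: "1 \<le> r" and s: "1 \<le> s" and x: "x \<noteq> 0"
  shows "ratio r s A x \<le> real CARD('m) powr pos_part (recip p - recip r)
                         * real CARD('n) powr pos_part (recip s - recip q) * ratio p q A x"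
proof -
  define Cm where "Cm = real CARD('m) powr pos_part (recip p - recip r)"
  define Cn where "Cn = real CARD('n) powr pos_part (recip s - recip q)"
  have Cm: "Cm > 0" and Cn: "Cn > 0" by (simp_all add: Cm_def Cn_def)
  have h1: "lpnorm s (A *v x) \<le> Cn * lpnorm q (A *v x)"
    unfolding lpnorm_Lp Cn_def by (rule L_ineq[OF _ s q]) simp
  have h2: "lpnorm p x \<le> Cm * lpnorm r x"
    unfolding lpnorm_Lp Cm_def by (rule L_ineq[OF _ p r]) simp
  have u: "lpnorm p x > 0" and v: "lpnorm r x > 0" using lpnorm_pos x p r by auto
  have w: "lpnorm q (A *v x) \<ge> 0" by (rule lpnorm_nonneg)
  have "ratio r s A x \<le> Cn * lpnorm q (A *v x) / lpnorm r x"
    unfolding ratio_def using h1 v by (simp add: divide_right_mono)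
  also have "\<dots> \<le> Cn * lpnorm q (A *v x) * Cm / lpnorm p x"
    using h2 u v w Cn Cm apply (simp add: field_simps)
    using mult_right_mono[OF h2 w] by (simp add: mult.assoc)
  finally show ?thesis by (simp add: Cm_def Cn_def ratio_def mult_ac)
qed

lemma main_generic:
  fixes p q r s r' s' :: ereal and A :: "'a::{real_normed_field,heine_borel}^'m::finite^'n::finite"
  assumes p: "1 \<le> p" and q: "1 \<le> q" and r: "1 \<le> r" and s: "1 \<le> s" and r': "1 \<le> r'" and s': "1 \<le> s'"
    and sg1: "sgn_diff p r' = sgn_diff p r" and sg2: "sgn_diff q s' = sgn_diff q s"
    and eq: "opnorm r s A = real CARD('m) powr pos_part (recip p - recip r)
                         * real CARD('n) powr pos_part (recip s - recip q) * opnorm p q A"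
  shows "opnorm r' s' A = real CARD('m) powr pos_part (recip p - recip r')
                         * real CARD('n) powr pos_part (recip s' - recip q) * opnorm p q A"
proof -
  define Cm where "Cm = real CARD('m) powr pos_part (recip p - recip r)"
  define Cn where "Cn = real CARD('n) powr pos_part (recip s - recip q)"
  define Cm' where "Cm' = real CARD('m) powr pos_part (recip p - recip r')"
  define Cn' where "Cn' = real CARD('n) powr pos_part (recip s' - recip q)"
  have Cm: "Cm > 0" and Cn: "Cn > 0" and Cm': "Cm' > 0" and Cn': "Cn' > 0"
    by (simp_all add: Cm_def Cn_def Cm'_def Cn'_def)
  obtain x0 where x0: "x0 \<noteq> 0" "\<And>x. x \<noteq> 0 \<Longrightarrow> ratio p q A x \<le> ratio p q A x0"
      "opnorm p q A = ratio p q A x0"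
    using attain[OF p q, of A] by blast
  obtain x1 where x1: "x1 \<noteq> 0" "\<And>x. x \<noteq> 0 \<Longrightarrow> ratio r s A x \<le> ratio r s A x1"
      "opnorm r s A = ratio r s A x1"
    using attain[OF r s, of A] by blast
  obtain x2 where x2: "x2 \<noteq> 0" "\<And>x. x \<noteq> 0 \<Longrightarrow> ratio r' s' A x \<le> ratio r' s' A x2"
      "opnorm r' s' A = ratio r' s' A x2"
    using attain[OF r' s', of A] by blast
  define P where "P = opnorm p q A"
  have P0: "P \<ge> 0" unfolding P_def x0(3) ratio_def by (simp add: lpnorm_nonneg)
  have Pge: "ratio p q A x \<le> P" if "x \<noteq> 0" for x using x0 that by (simp add: P_def)
  have upper: "opnorm r' s' A \<le> Cm' * Cn' * P"
  proof -
    have "opnorm r' s' A \<le> Cm' * Cn' * ratio p q A x2"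
      using x2(3) ratio_le_factor[OF p q r' s' x2(1), of A] by (simp add: Cm'_def Cn'_def)
    also have "\<dots> \<le> Cm' * Cn' * P" using Pge[OF x2(1)] Cm' Cn' by simp
    finally show ?thesis .
  qed
  have lower0: "opnorm r' s' A \<ge> 0" unfolding x2(3) ratio_def by (simp add: lpnorm_nonneg)
  show ?thesis
  proof (cases "P = 0")
    case True
    thus ?thesis using upper lower0 by (simp add: P_def Cm'_def Cn'_def)
  next
    case False
    hence Ppos: "P > 0" using P0 by simp
    define u where "u = lpnorm p x1"
    define v where "v = lpnorm r x1"
    define w where "w = lpnorm q (A *v x1)"
    define z where "z = lpnorm s (A *v x1)"
    have u: "u > 0" and v: "v > 0" using lpnorm_pos x1(1) p r by (auto simp: u_def v_def)
    have w0: "w \<ge> 0" by (simp add: w_def lpnorm_nonneg)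
    have h1: "z \<le> Cn * w"
      unfolding lpnorm_Lp Cn_def z_def w_def by (rule L_ineq[OF _ s q]) simp
    have h2: "u \<le> Cm * v"
      unfolding lpnorm_Lp Cm_def u_def v_def by (rule L_ineq[OF _ p r]) simp
    have h3: "w / u \<le> P" using Pge[OF x1(1)] by (simp add: ratio_def w_def u_def)
    have h4: "z / v = Cm * Cn * P"
      using eq x1(3) by (simp add: ratio_def z_def v_def Cm_def Cn_def P_def)
    have zpos: "z > 0" using h4 v Cm Cn Ppos by (simp add: field_simps)
    have wpos: "w > 0"
    proof (rule ccontr)
      assume "\<not> w > 0" hence "w = 0" using w0 by simp
      thus False using zpos h1 by simp
    qed
    have h3': "w \<le> P * u" using h3 u by (simp add: field_simps)
    have h4': "z = Cm * Cn * P * v" using h4 v by (simp add: field_simps)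
    have e1: "z = Cn * w"
    proof (rule antisym[OF h1])
      have "Cn * w \<le> Cn * (P * u)" using h3' Cn by simp
      also have "P * u \<le> P * (Cm * v)" using h2 Ppos by simp
      hence "Cn * (P * u) \<le> Cn * (P * (Cm * v))" using Cn by simp
      finally have "Cn * w \<le> Cn * (P * (Cm * v))" .
      thus "Cn * w \<le> z" using h4' by (simp add: mult_ac)
    qed
    have e2: "u = Cm * v"
    proof (rule antisym[OF h2])
      have "Cm * Cn * P * v = Cn * w" using h4' e1 by linarith
      also have "\<dots> \<le> Cn * P * u" using h3' Cn by (simp add: mult.assoc)
      finally have "Cn * P * (Cm * v) \<le> Cn * P * u" by (simp add: mult_ac)
      thus "Cm * v \<le> u" using Cn Ppos by (simp add: mult_le_cancel_left_pos)
    qed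
    have e3: "w = P * u"
    proof (rule antisym[OF h3'])
      have "Cn * (P * u) = Cm * Cn * P * v" by (simp add: e2 mult_ac)
      hence "Cn * (P * u) = Cn * w" using h4' e1 by linarith
      hence "P * u = w" using Cn by (metis mult_left_cancel less_irrefl)
      thus "P * u \<le> w" by simp
    qed
    have t1: "lpnorm p x1 = Cm' * lpnorm r' x1"
      unfolding lpnorm_Lp Cm'_def
      by (rule transfer_dom[OF _ p r r' sg1]) (use e2 in \<open>auto simp: u_def v_def Cm_def lpnorm_Lp\<close>)
    have t2: "lpnorm s' (A *v x1) = Cn' * lpnorm q (A *v x1)"
      unfolding lpnorm_Lp Cn'_def
      by (rule transfer_cod[OF _ q s s' sg2]) (use e1 in \<open>auto simp: z_def w_def Cn_def lpnorm_Lp\<close>)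
    have "ratio r' s' A x1 = Cn' * w / (u / Cm')"
      using t1 t2 Cm' by (simp add: ratio_def u_def w_def field_simps)
    also have "\<dots> = Cm' * Cn' * P" using e3 u Cm' by (simp add: field_simps)
    finally have "Cm' * Cn' * P \<le> opnorm r' s' A" using x2(2)[OF x1(1)] x2(3) by simp
    thus ?thesis using upper by (simp add: P_def Cm'_def Cn'_def)
  qed
qed


theorem proposition3:
  fixes p q r s r' s' :: ereal
  assumes "1 \<le> p" "1 \<le> q" "1 \<le> r" "1 \<le> s" "1 \<le> r'" "1 \<le> s'"
    and "sgn_diff p r' = sgn_diff p r" and "sgn_diff q s' = sgn_diff q s"
  shows "(\<forall>A :: real^'m::finite^'n::finite.
            opnorm r s A = real CARD('m) powr pos_part (recip p - recip r)
                         * real CARD('n) powr pos_part (recip s - recip q) * opnorm p q A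
        \<longrightarrow> opnorm r' s' A = real CARD('m) powr pos_part (recip p - recip r')
                         * real CARD('n) powr pos_part (recip s' - recip q) * opnorm p q A)
       \<and> (\<forall>A :: complex^'m::finite^'n::finite.
            opnorm r s A = real CARD('m) powr pos_part (recip p - recip r)
                         * real CARD('n) powr pos_part (recip s - recip q) * opnorm p q A
        \<longrightarrow> opnorm r' s' A = real CARD('m) powr pos_part (recip p - recip r')
                         * real CARD('n) powr pos_part (recip s' - recip q) * opnorm p q A)"
  using main_generic[where 'a=real, OF assms] main_generic[where 'a=complex, OF assms] by blast

end
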